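(* Let $(X,\Pi)$ be a quasiconcave quasisubmodular aggregative game with aggregator $a$, and let $x^*$ be a fESS of it. If $x\in X$ is between some $x'\in X$ and $x^*$, then $\Pi(x,a(x,x'))\ge\Pi(x',a(x,x'))$.
   Context: An aggregative game $(X,\Pi)$ consists of: a totally ordered action set $X$ and a totally ordered set $Z$; an aggregator $a:X\times X\to Z$ that is symmetric ($a(x,y)=a(y,x)$) and monotone increasing (if $x''\ge x'$, $y''\ge y'$ and $(x'',y'')\neq(x',y')$ then $a(x'',y'')>a(x',y')$); and $\Pi:X\times Z\to\mathbb{R}$, the underlying symmetric two-player game having payoff $\pi(x,y)=\Pi(x,a(x,y))$. It is quasisubmodular if for all $z''>z'$ in $Z$ and $x''>x'$ in $X$: $\Pi(x'',z'')-\Pi(x',z'')\ge0\Rightarrow\Pi(x'',z')-\Pi(x',z')\ge0$ and $\Pi(x'',z'')-\Pi(x',z'')>0\Rightarrow\Pi(x'',z')-\Pi(x',z')>0$. It is quasiconcave if for all $x<x'<x''$ in $X$ and $z\in Z$, $\Pi(x',z)\ge\min\{\Pi(x,z),\Pi(x'',z)\}$. An action $x^*$ is a fESS if $\Pi(x^*,a(x^*,x))\ge\Pi(x,a(x^*,x))$ for all $x\in X$. $x$ is between $x'$ and $x^*$ if $x'\le x\le x^*$ or $x^*\le x\le x'$. *)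

theory Defs
  imports Main "HOL.Real"
begin

definition aggregator :: "('x::linorder \<Rightarrow> 'x \<Rightarrow> 'z::linorder) \<Rightarrow> bool" where
  "aggregator a \<longleftrightarrow>
     (\<forall>x y. a x y = a y x) \<and>
     (\<forall>x' x'' y' y''. x'' \<ge> x' \<and> y'' \<ge> y' \<and> (x'', y'') \<noteq> (x', y')
        \<longrightarrow> a x'' y'' > a x' y')"

definition quasisubmodular :: "('x::linorder \<Rightarrow> 'z::linorder \<Rightarrow> real) \<Rightarrow> bool" where
  "quasisubmodular Pi \<longleftrightarrow>
     (\<forall>z' z'' x' x''. z'' > z' \<and> x'' > x' \<longrightarrow>
        (Pi x'' z'' - Pi x' z'' \<ge> 0 \<longrightarrow> Pi x'' z' - Pi x' z' \<ge> 0) \<and>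
        (Pi x'' z'' - Pi x' z'' > 0 \<longrightarrow> Pi x'' z' - Pi x' z' > 0))"

definition quasiconcave_game :: "('x::linorder \<Rightarrow> 'z \<Rightarrow> real) \<Rightarrow> bool" where
  "quasiconcave_game Pi \<longleftrightarrow>
     (\<forall>x x' x'' z. x < x' \<and> x' < x'' \<longrightarrow> Pi x' z \<ge> min (Pi x z) (Pi x'' z))"

definition fESS :: "('x \<Rightarrow> 'x \<Rightarrow> 'z) \<Rightarrow> ('x \<Rightarrow> 'z \<Rightarrow> real) \<Rightarrow> 'x \<Rightarrow> bool" where
  "fESS a Pi xs \<longleftrightarrow> (\<forall>x. Pi xs (a xs x) \<ge> Pi x (a xs x))"

definition between :: "'x::linorder \<Rightarrow> 'x \<Rightarrow> 'x \<Rightarrow> bool" where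
  "between x x' xs \<longleftrightarrow> (x' \<le> x \<and> x \<le> xs) \<or> (xs \<le> x \<and> x \<le> x')"

end

theory Submission
  imports Defs
begin

theorem lemma6:
  fixes a :: "'x::linorder \<Rightarrow> 'x \<Rightarrow> 'z::linorder"
    and Pi :: "'x \<Rightarrow> 'z \<Rightarrow> real"
    and xs x x' :: 'x
  assumes "aggregator a"
    and "quasisubmodular Pi"
    and "quasiconcave_game Pi"
    and "fESS a Pi xs"
    and "between x x' xs"
  shows "Pi x (a x x') \<ge> Pi x' (a x x')"
proof -
  have sym: "\<And>u v. a u v = a v u" and mono: "\<And>x' x'' y' y''. x'' \<ge> x' \<Longrightarrow> y'' \<ge> y' \<Longrightarrow> (x'', y'') \<noteq> (x', y') \<Longrightarrow> a x'' y'' > a x' y'"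
    using assms(1) unfolding aggregator_def by blast+
  have qs: "\<And>z' z'' u' u''. z'' > z' \<Longrightarrow> u'' > u' \<Longrightarrow>
        (Pi u'' z'' - Pi u' z'' \<ge> 0 \<longrightarrow> Pi u'' z' - Pi u' z' \<ge> 0) \<and>
        (Pi u'' z'' - Pi u' z'' > 0 \<longrightarrow> Pi u'' z' - Pi u' z' > 0)"
    using assms(2) unfolding quasisubmodular_def by blast
  have qc: "\<And>u u' u'' z. u < u' \<Longrightarrow> u' < u'' \<Longrightarrow> Pi u' z \<ge> min (Pi u z) (Pi u'' z)"
    using assms(3) unfolding quasiconcave_game_def by blast
  have f: "\<And>v. Pi xs (a xs v) \<ge> Pi v (a xs v)" using assms(4) unfolding fESS_def by blast
  show ?thesis
  proof (cases "x = x'")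
    case True then show ?thesis by simp
  next
    case ne: False
    show ?thesis
    proof (cases "x = xs")
      case True then show ?thesis using f[of x'] by simp
    next
      case nx: False
      from assms(5) consider "x' < x" "x < xs" | "xs < x" "x < x'"
        unfolding between_def using ne nx by force
      then show ?thesis
      proof cases
        case 1
        have zz: "a x x' < a xs x'" using mono[of x xs x' x'] 1 by auto
        have m: "Pi x (a xs x') \<ge> min (Pi x' (a xs x')) (Pi xs (a xs x'))" using qc 1 by blast
        have "Pi x (a xs x') - Pi x' (a xs x') \<ge> 0" using m f[of x'] by linarith
        then show ?thesis using qs[OF zz 1(1)] by linarith
      next
        case 2
        have zz: "a xs x' < a x x'" using mono[of xs x x' x'] 2 by auto
        have m: "Pi x (a xs x') \<ge> min (Pi xs (a xs x')) (Pi x' (a xs x'))" using qc 2 by blast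
        have "\<not> (Pi x' (a xs x') - Pi x (a xs x') > 0)" using m f[of x'] by linarith
        then show ?thesis using qs[OF zz 2(2)] by linarith
      qed
    qed
  qed
qed

end
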